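(* Let $H$ be a real Hilbert space, $A:D(A)\subset H\to H$ a linear, self-adjoint, positive, unbounded operator with compact inverse, eigenvalues $0<\lambda_1\le\lambda_2\le\dots$ and orthonormal eigenbasis $\{e_n\}$, $H^s:=D(A^{s/2})$, $\alpha\in[0,1)$, and $f:H^\alpha\to H^{-\alpha}$ with $\|f(u)\|_{H^{-\alpha}}\le C$ and $\|f(u_1)-f(u_2)\|_{H^{-\alpha}}\le L\|u_1-u_2\|_{H^\alpha}$ for all $u,u_1,u_2\in H^\alpha$. Let $g\in H^{-\alpha}$ be such that the set of equilibria of $\partial_t u+Au-f(u)=g$ is finite; let $S(t)$ be its solution semigroup on $H$ and $\mathcal{A}$ its global attractor. Let $N\in\mathbb{N}$ satisfy $L<\lambda_{N+1}^{1-\alpha}$ and let $P_N$ be the orthogonal projector onto $\mathrm{span}\{e_1,\dots,e_N\}$. Let $F:H\to\mathbb{R}$ be continuous, $\tau>0$, $k\in\mathbb{N}$, such that $F(k,u):=(F(u),F(S(\tau)u),\dots,F(S((k-1)\tau)u))$ is injective on $\mathcal{A}$; set $\bar{\mathcal{A}}:=F(k,\mathcal{A})\subset\mathbb{R}^k$, $\Theta(\xi):=S(k\tau)\big(F(k,\cdot)|_{\mathcal{A}}\big)^{-1}(\xi)$ for $\xi\in\bar{\mathcal{A}}$, and let $\Theta_N:\mathbb{R}^k\to P_NH$ be any continuous extension of $\xi\mapsto P_N\Theta(\xi)$ from $\bar{\mathcal{A}}$. Let $u:\mathbb{R}\to\mathcal{A}$ be a complete trajectory on the attractor. Then there exists $K_0$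 such that for every $K>K_0$ there is $\beta>0$ (independent of $u$ and $v$) such that every solution $v$ of $$\partial_t v+Av-f(v)+K\Big(P_Nv(t)-\Theta_N\big(F(u(t-k\tau)),\dots,F(u(t-\tau))\big)\Big)=g,\qquad t\ge0,$$ with $v(0)\in H$ satisfies $\|v(t)-u(t)\|_H\le\|v(0)-u(0)\|_He^{-\beta t}$ for all $t\ge0$.
   Context: A complete trajectory on $\mathcal{A}$ is a map $u:\mathbb{R}\to\mathcal{A}$ with $S(t)u(s)=u(t+s)$ for $s\in\mathbb{R}$, $t\ge0$. The global attractor $\mathcal{A}$ of the (dissipative) solution semigroup is compact, so $F(k,\cdot)$ is a homeomorphism from $\mathcal{A}$ onto $\bar{\mathcal{A}}$ and $\Theta$ is continuous; a continuous extension $\Theta_N$ exists by the Tietze extension theorem. *)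

theory Defs
  imports "HOL-Analysis.Analysis"
begin

text \<open>Spectral setting: e is an orthonormal basis of H consisting of eigenvectors of A,
  A (e n) = lam n *R e n (indices shifted by one: e 0 = e_1, lam 0 = lambda_1).\<close>

definition orthonormal_basis :: "(nat \<Rightarrow> 'a::{real_inner,complete_space}) \<Rightarrow> bool" where
  "orthonormal_basis e \<longleftrightarrow> (\<forall>m n. inner (e m) (e n) = (if m = n then 1 else 0))
     \<and> (\<forall>u. (\<lambda>n. inner u (e n) *\<^sub>R e n) sums u)"

definition Hs :: "(nat \<Rightarrow> real) \<Rightarrow> (nat \<Rightarrow> 'a::real_inner) \<Rightarrow> real \<Rightarrow> 'a set" where
  "Hs lam e s = {u. summable (\<lambda>n. lam n powr s * (inner u (e n))\<^sup>2)}"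

definition Hs_norm :: "(nat \<Rightarrow> real) \<Rightarrow> (nat \<Rightarrow> 'a::real_inner) \<Rightarrow> real \<Rightarrow> 'a \<Rightarrow> real" where
  "Hs_norm lam e s u = sqrt (\<Sum>n. lam n powr s * (inner u (e n))\<^sup>2)"

text \<open>Negative-order space H^{-s}, s \<ge> 0, represented by coefficient sequences
  c n = <w, e n> (the completion of H w.r.t. the H^{-s} norm).\<close>
definition Hneg :: "(nat \<Rightarrow> real) \<Rightarrow> real \<Rightarrow> (nat \<Rightarrow> real) set" where
  "Hneg lam s = {c. summable (\<lambda>n. lam n powr (- s) * (c n)\<^sup>2)}"

definition Hneg_norm :: "(nat \<Rightarrow> real) \<Rightarrow> real \<Rightarrow> (nat \<Rightarrow> real) \<Rightarrow> real" where
  "Hneg_norm lam s c = sqrt (\<Sum>n. lam n powr (- s) * (c n)\<^sup>2)"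

definition PN :: "(nat \<Rightarrow> 'a::real_inner) \<Rightarrow> nat \<Rightarrow> 'a \<Rightarrow> 'a" where
  "PN e N u = (\<Sum>n<N. inner u (e n) *\<^sub>R e n)"

text \<open>Weak (Galerkin/coordinatewise) solution on [0,\<infinity>) of
  d/dt v + A v = h(t), where h(t) \<in> H^{-\<alpha>} is given by coefficients h t n:
  v continuous into H, v(t) \<in> H^\<alpha> for t > 0, and every coordinate satisfies
  the integrated equation.\<close>
definition weak_sol ::
  "(nat \<Rightarrow> real) \<Rightarrow> (nat \<Rightarrow> 'a::real_inner) \<Rightarrow> real \<Rightarrow> (real \<Rightarrow> nat \<Rightarrow> real) \<Rightarrow> (real \<Rightarrow> 'a) \<Rightarrow> bool" where
  "weak_sol lam e \<alpha> h v \<longleftrightarrow>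
     continuous_on {0..} v \<and> (\<forall>t>0. v t \<in> Hs lam e \<alpha>) \<and>
     (\<forall>n. \<forall>t\<ge>0. ((\<lambda>s. - lam n * inner (v s) (e n) + h s n) has_integral
                    (inner (v t) (e n) - inner (v 0) (e n))) {0..t})"

definition sol_eq ::
  "(nat \<Rightarrow> real) \<Rightarrow> (nat \<Rightarrow> 'a::real_inner) \<Rightarrow> real \<Rightarrow> ('a \<Rightarrow> nat \<Rightarrow> real) \<Rightarrow> (nat \<Rightarrow> real) \<Rightarrow> (real \<Rightarrow> 'a) \<Rightarrow> bool" where
  "sol_eq lam e \<alpha> f g v \<longleftrightarrow> weak_sol lam e \<alpha> (\<lambda>s n. f (v s) n + g n) v"

definition equilibria ::
  "(nat \<Rightarrow> real) \<Rightarrow> (nat \<Rightarrow> 'a::real_inner) \<Rightarrow> real \<Rightarrow> ('a \<Rightarrow> nat \<Rightarrow> real) \<Rightarrow> (nat \<Rightarrow> real) \<Rightarrow> 'a set" where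
  "equilibria lam e \<alpha> f g = {u \<in> Hs lam e \<alpha>. \<forall>n. lam n * inner u (e n) - f u n = g n}"

definition solution_semigroup ::
  "(nat \<Rightarrow> real) \<Rightarrow> (nat \<Rightarrow> 'a::real_inner) \<Rightarrow> real \<Rightarrow> ('a \<Rightarrow> nat \<Rightarrow> real) \<Rightarrow> (nat \<Rightarrow> real)
     \<Rightarrow> (real \<Rightarrow> 'a \<Rightarrow> 'a) \<Rightarrow> bool" where
  "solution_semigroup lam e \<alpha> f g S \<longleftrightarrow>
     (\<forall>u0. S 0 u0 = u0 \<and> sol_eq lam e \<alpha> f g (\<lambda>t. S t u0))"

definition global_attractor :: "(real \<Rightarrow> 'a::metric_space \<Rightarrow> 'a) \<Rightarrow> 'a set \<Rightarrow> bool" where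
  "global_attractor S \<A> \<longleftrightarrow> compact \<A> \<and> \<A> \<noteq> {} \<and> (\<forall>t\<ge>0. S t ` \<A> = \<A>) \<and>
     (\<forall>B. bounded B \<longrightarrow> (\<forall>\<epsilon>>0. \<exists>T. \<forall>t\<ge>T. \<forall>x\<in>B. infdist (S t x) \<A> < \<epsilon>))"

definition complete_trajectory :: "(real \<Rightarrow> 'a \<Rightarrow> 'a) \<Rightarrow> 'a set \<Rightarrow> (real \<Rightarrow> 'a) \<Rightarrow> bool" where
  "complete_trajectory S \<A> u \<longleftrightarrow> (\<forall>s. u s \<in> \<A>) \<and> (\<forall>s. \<forall>t\<ge>0. S t (u s) = u (t + s))"

text \<open>R^k is represented by the vectors in nat \<Rightarrow> real vanishing from index k on
  (product topology = Euclidean topology there).\<close>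
definition Rk :: "nat \<Rightarrow> (nat \<Rightarrow> real) set" where
  "Rk k = {\<xi>. \<forall>j\<ge>k. \<xi> j = 0}"

definition Fk :: "('a \<Rightarrow> real) \<Rightarrow> (real \<Rightarrow> 'a \<Rightarrow> 'a) \<Rightarrow> real \<Rightarrow> nat \<Rightarrow> 'a \<Rightarrow> nat \<Rightarrow> real" where
  "Fk F S \<tau> k u = (\<lambda>j. if j < k then F (S (real j * \<tau>) u) else 0)"

end

theory Submission
  imports Defs
begin


lemma integrable_cont_times:
  fixes g \<psi> :: "real \<Rightarrow> real"
  assumes cg: "continuous_on {p..q} g" and i\<psi>: "\<psi> integrable_on {p..q}"
    and b\<psi>: "\<And>s. s \<in> {p..q} \<Longrightarrow> \<bar>\<psi> s\<bar> \<le> B"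
  shows "(\<lambda>s. g s * \<psi> s) integrable_on {p..q}"
proof -
  obtain M where M: "\<And>s. s \<in> {p..q} \<Longrightarrow> \<bar>g s\<bar> \<le> M"
    using compact_imp_bounded[OF compact_continuous_image[OF cg compact_Icc]]
    by (metis bounded_real imageI)
  have m1: "g \<in> borel_measurable (lebesgue_on {p..q})"
    by (rule continuous_imp_measurable_on_sets_lebesgue[OF cg]) auto
  have m2: "\<psi> \<in> borel_measurable (lebesgue_on {p..q})"
    by (rule integrable_imp_measurable[OF i\<psi>])
  have m: "(\<lambda>s. g s * \<psi> s) \<in> borel_measurable (lebesgue_on {p..q})"
    using m1 m2 by measurable
  show ?thesis
  proof (rule measurable_bounded_by_integrable_imp_integrable_real[OF m _ _])
    show "(\<lambda>s. M * B) integrable_on {p..q}" by (rule integrable_continuous_interval) (rule continuous_on_const)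
    show "\<bar>g s * \<psi> s\<bar> \<le> M * B" if "s \<in> {p..q}" for s
      using M[OF that] b\<psi>[OF that] by (simp add: abs_mult mult_mono')
  qed auto
qed

lemma prod_rule:
  fixes a c \<psi> \<phi> :: "real \<Rightarrow> real" and p q B :: real
  assumes pq: "p \<le> q"
    and ca: "continuous_on {p..q} a" and cc: "continuous_on {p..q} c"
    and ia: "\<And>r t. p \<le> r \<Longrightarrow> r \<le> t \<Longrightarrow> t \<le> q \<Longrightarrow> (\<psi> has_integral (a t - a r)) {r..t}"
    and ic: "\<And>r t. p \<le> r \<Longrightarrow> r \<le> t \<Longrightarrow> t \<le> q \<Longrightarrow> (\<phi> has_integral (c t - c r)) {r..t}"
    and b\<psi>: "\<And>s. s \<in> {p..q} \<Longrightarrow> \<bar>\<psi> s\<bar> \<le> B"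
    and b\<phi>: "\<And>s. s \<in> {p..q} \<Longrightarrow> \<bar>\<phi> s\<bar> \<le> B"
  shows "((\<lambda>s. c s * \<psi> s + a s * \<phi> s) has_integral (a q * c q - a p * c p)) {p..q}"
proof -
  define h where "h = (\<lambda>s. c s * \<psi> s + a s * \<phi> s)"
  have B0: "0 \<le> B" using b\<psi>[of p] pq by auto
  have hint: "h integrable_on {p..q}"
    unfolding h_def
    by (intro integrable_add integrable_cont_times[OF cc _ b\<psi>] integrable_cont_times[OF ca _ b\<phi>])
       (use ia[OF order_refl pq order_refl] ic[OF order_refl pq order_refl] in auto)
  define D where "D = (\<lambda>x. a x * c x - integral {p..x} h)"
  have key: "D z - D y = integral {y..z} (\<lambda>s. (c z - c s) * \<psi> s + (a y - a s) * \<phi> s)"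
    if yz: "p \<le> y" "y \<le> z" "z \<le> q" for y z
  proof -
    have hyz: "h integrable_on {y..z}"
      by (rule integrable_on_subinterval[OF hint]) (use yz in auto)
    have comb: "integral {p..y} h + integral {y..z} h = integral {p..z} h"
      by (rule Henstock_Kurzweil_Integration.integral_combine) (use yz in \<open>auto intro: integrable_on_subinterval[OF hint]\<close>)
    have i1: "((\<lambda>s. c z * \<psi> s) has_integral c z * (a z - a y)) {y..z}"
      by (rule has_integral_mult_right[OF ia]) (use yz in auto)
    have i2: "((\<lambda>s. a y * \<phi> s) has_integral a y * (c z - c y)) {y..z}"
      by (rule has_integral_mult_right[OF ic]) (use yz in auto)
    have i3: "(h has_integral integral {y..z} h) {y..z}"
      using hyz by (simp add: has_integral_integral)
    have "((\<lambda>s. c z * \<psi> s + a y * \<phi> s - h s) has_integral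
            (c z * (a z - a y) + a y * (c z - c y) - integral {y..z} h)) {y..z}"
      by (intro has_integral_diff has_integral_add i1 i2 i3)
    moreover have "(\<lambda>s. c z * \<psi> s + a y * \<phi> s - h s) = (\<lambda>s. (c z - c s) * \<psi> s + (a y - a s) * \<phi> s)"
      by (auto simp: h_def algebra_simps)
    ultimately have "integral {y..z} (\<lambda>s. (c z - c s) * \<psi> s + (a y - a s) * \<phi> s)
        = c z * (a z - a y) + a y * (c z - c y) - integral {y..z} h"
      by (simp add: integral_unique)
    then show ?thesis using comb by (simp add: D_def algebra_simps)
  qed
  have bnd: "\<bar>D z - D y\<bar> \<le> B * (2 * \<eta>) * (z - y)"
    if yz: "p \<le> y" "y \<le> z" "z \<le> q" and eta: "0 \<le> \<eta>"
      and hc: "\<And>s. s \<in> {y..z} \<Longrightarrow> \<bar>c z - c s\<bar> \<le> \<eta>"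
      and ha: "\<And>s. s \<in> {y..z} \<Longrightarrow> \<bar>a y - a s\<bar> \<le> \<eta>" for y z \<eta>
  proof -
    have int: "(\<lambda>s. (c z - c s) * \<psi> s + (a y - a s) * \<phi> s) integrable_on {y..z}"
    proof (intro integrable_add integrable_cont_times)
      show "continuous_on {y..z} (\<lambda>s. c z - c s)"
        by (intro continuous_intros continuous_on_subset[OF cc]) (use yz in auto)
      show "continuous_on {y..z} (\<lambda>s. a y - a s)"
        by (intro continuous_intros continuous_on_subset[OF ca]) (use yz in auto)
      show "\<psi> integrable_on {y..z}" using ia[OF yz] by auto
      show "\<phi> integrable_on {y..z}" using ic[OF yz] by auto
      show "\<bar>\<psi> s\<bar> \<le> B" if "s \<in> {y..z}" for s using b\<psi> that yz by auto
      show "\<bar>\<phi> s\<bar> \<le> B" if "s \<in> {y..z}" for s using b\<phi> that yz by auto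
    qed
    have "norm (integral {y..z} (\<lambda>s. (c z - c s) * \<psi> s + (a y - a s) * \<phi> s)) \<le> (B * (2 * \<eta>)) * Henstock_Kurzweil_Integration.content {y..z}"
    proof (rule has_integral_bound_real[where S="{}"])
      show "0 \<le> B * (2 * \<eta>)" using B0 eta by simp
      show "((\<lambda>s. (c z - c s) * \<psi> s + (a y - a s) * \<phi> s) has_integral
         integral {y..z} (\<lambda>s. (c z - c s) * \<psi> s + (a y - a s) * \<phi> s)) {y..z}"
        using int by (simp add: has_integral_integral)
      show "norm ((c z - c s) * \<psi> s + (a y - a s) * \<phi> s) \<le> B * (2 * \<eta>)" if "s \<in> {y..z} - {}" for s
      proof -
        have s: "s \<in> {p..q}" using that yz by auto
        have "\<bar>(c z - c s) * \<psi> s\<bar> \<le> \<eta> * B"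
          unfolding abs_mult by (rule mult_mono) (use hc[of s] b\<psi>[OF s] that eta in auto)
        moreover have "\<bar>(a y - a s) * \<phi> s\<bar> \<le> \<eta> * B"
          unfolding abs_mult by (rule mult_mono) (use ha[of s] b\<phi>[OF s] that eta in auto)
        ultimately show ?thesis using abs_triangle_ineq[of "(c z - c s) * \<psi> s" "(a y - a s) * \<phi> s"] by (simp add: algebra_simps)
      qed
    qed auto
    then show ?thesis using key[OF yz] yz by simp
  qed
  have deriv: "(D has_derivative (\<lambda>h. 0)) (at x within {p..q})" if x: "x \<in> {p..q}" for x
    unfolding has_derivative_within_alt
  proof (intro conjI allI impI)
    show "bounded_linear (\<lambda>h::real. 0::real)" by simp
    fix e :: real assume e: "e > 0"
    define \<eta> where "\<eta> = e / (2 * (B + 1))"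
    have \<eta>: "\<eta> > 0" using e B0 by (simp add: \<eta>_def)
    obtain d1 where d1: "d1 > 0" "\<And>s. s \<in> {p..q} \<Longrightarrow> dist s x < d1 \<Longrightarrow> dist (a s) (a x) < \<eta>/2"
      using ca x \<eta> unfolding continuous_on_iff by (metis half_gt_zero)
    obtain d2 where d2: "d2 > 0" "\<And>s. s \<in> {p..q} \<Longrightarrow> dist s x < d2 \<Longrightarrow> dist (c s) (c x) < \<eta>/2"
      using cc x \<eta> unfolding continuous_on_iff by (metis half_gt_zero)
    have Beta: "B * (2 * \<eta>) \<le> e"
      using B0 e by (simp add: \<eta>_def field_simps)
    show "\<exists>d>0. \<forall>y\<in>{p..q}. norm (y - x) < d \<longrightarrow> norm (D y - D x - 0) \<le> e * norm (y - x)"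
    proof (intro exI[of _ "min d1 d2"] conjI ballI impI)
      show "0 < min d1 d2" using d1 d2 by simp
      fix y assume y: "y \<in> {p..q}" and yd: "norm (y - x) < min d1 d2"
      have close: "\<And>s. s \<in> {p..q} \<Longrightarrow> \<bar>s - x\<bar> \<le> \<bar>y - x\<bar> \<Longrightarrow> \<bar>a s - a x\<bar> < \<eta>/2 \<and> \<bar>c s - c x\<bar> < \<eta>/2"
        using d1 d2 yd by (auto simp: dist_real_def)
      show "norm (D y - D x - 0) \<le> e * norm (y - x)"
      proof (cases "x \<le> y")
        case True
        have "\<bar>D y - D x\<bar> \<le> B * (2 * \<eta>) * (y - x)"
        proof (rule bnd)
          show "\<bar>c y - c s\<bar> \<le> \<eta>" if "s \<in> {x..y}" for s
          proof -
            have "\<bar>s - x\<bar> \<le> \<bar>y - x\<bar>" "s \<in> {p..q}" using that x y by auto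
            then have "\<bar>c s - c x\<bar> < \<eta>/2" using close by blast
            moreover have "\<bar>c y - c x\<bar> < \<eta>/2" using close[of y] y by auto
            ultimately show ?thesis by linarith
          qed
          show "\<bar>a x - a s\<bar> \<le> \<eta>" if "s \<in> {x..y}" for s
          proof -
            have "\<bar>s - x\<bar> \<le> \<bar>y - x\<bar>" "s \<in> {p..q}" using that x y by auto
            then have "\<bar>a s - a x\<bar> < \<eta>/2" using close by blast
            then show ?thesis by linarith
          qed
        qed (use True x y \<eta> in auto)
        also have "\<dots> \<le> e * (y - x)" using Beta True by (intro mult_right_mono) auto
        finally show ?thesis using True by simp
      next
        case False
        have "\<bar>D x - D y\<bar> \<le> B * (2 * \<eta>) * (x - y)"
        proof (rule bnd)
          show "\<bar>c x - c s\<bar> \<le> \<eta>" if "s \<in> {y..x}" for s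
          proof -
            have "\<bar>s - x\<bar> \<le> \<bar>y - x\<bar>" "s \<in> {p..q}" using that x y by auto
            then have "\<bar>c s - c x\<bar> < \<eta>/2" using close by blast
            then show ?thesis by linarith
          qed
          show "\<bar>a y - a s\<bar> \<le> \<eta>" if "s \<in> {y..x}" for s
          proof -
            have "\<bar>s - x\<bar> \<le> \<bar>y - x\<bar>" "s \<in> {p..q}" using that x y by auto
            then have "\<bar>a s - a x\<bar> < \<eta>/2" using close by blast
            moreover have "\<bar>a y - a x\<bar> < \<eta>/2" using close[of y] y by auto
            ultimately show ?thesis by linarith
          qed
        qed (use False x y \<eta> in auto)
        also have "\<dots> \<le> e * (x - y)" using Beta False by (intro mult_right_mono) auto
        finally show ?thesis using False by simp
      qed
    qed
  qed
  obtain k where k: "\<And>x. x \<in> {p..q} \<Longrightarrow> D x = k"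
    using has_derivative_zero_constant[of "{p..q}" D] deriv by auto
  have "D q = D p" using k pq by auto
  then have "integral {p..q} h = a q * c q - a p * c p"
    by (simp add: D_def)
  then show ?thesis using hint unfolding h_def by (metis has_integral_integral)
qed

lemma parseval:
  assumes "orthonormal_basis e"
  shows "(\<lambda>n. (inner u (e n))\<^sup>2) sums (norm u)\<^sup>2"
proof -
  have s: "(\<lambda>n. inner u (e n) *\<^sub>R e n) sums u" and on: "\<And>m n. inner (e m) (e n) = (if m = n then 1 else 0)"
    using assms unfolding orthonormal_basis_def by auto
  have "(\<lambda>M. \<Sum>n<M. inner u (e n) *\<^sub>R e n) \<longlonglongrightarrow> u" using s by (simp add: sums_def)
  then have "(\<lambda>M. inner (\<Sum>n<M. inner u (e n) *\<^sub>R e n) u) \<longlonglongrightarrow> inner u u"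
    by (intro tendsto_inner tendsto_const)
  moreover have "inner (\<Sum>n<M. inner u (e n) *\<^sub>R e n) u = (\<Sum>n<M. (inner u (e n))\<^sup>2)" for M
    by (simp add: inner_sum_left power2_eq_square inner_commute[of "e _" u])
  ultimately show ?thesis by (simp add: sums_def power2_norm_eq_inner)
qed

lemma PN_coord:
  assumes "orthonormal_basis e"
  shows "inner (PN e N x) (e n) = (if n < N then inner x (e n) else 0)"
proof -
  have on: "\<And>m n. inner (e m) (e n) = (if m = n then 1 else 0)"
    using assms unfolding orthonormal_basis_def by auto
  have "inner (PN e N x) (e n) = (\<Sum>m<N. inner x (e m) * (if m = n then 1 else 0))"
    by (simp add: PN_def inner_sum_left on)
  also have "\<dots> = (\<Sum>m<N. if m = n then inner x (e n) else 0)"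
    by (rule sum.cong) auto
  also have "\<dots> = (if n < N then inner x (e n) else 0)"
    by (simp add: sum.delta')
  finally show ?thesis .
qed

lemma has_integral_from0:
  fixes f F :: "real \<Rightarrow> real"
  assumes h: "\<And>t. 0 \<le> t \<Longrightarrow> (f has_integral (F t - F 0)) {0..t}" and r: "0 \<le> r" "r \<le> t"
  shows "(f has_integral (F t - F r)) {r..t}"
proof -
  have it: "f integrable_on {0..t}" using h[of t] r by auto
  have "integral {0..r} f + integral {r..t} f = integral {0..t} f"
    by (rule Henstock_Kurzweil_Integration.integral_combine) (use r it in auto)
  moreover have "integral {0..r} f = F r - F 0" "integral {0..t} f = F t - F 0"
    using h r by (auto intro: integral_unique)
  moreover have "f integrable_on {r..t}" by (rule integrable_on_subinterval[OF it]) (use r in auto)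
  ultimately show ?thesis by (metis add_diff_cancel_left' diff_diff_eq2 has_integral_integral add.commute diff_add_cancel)
qed

lemma amgm: fixes x y c :: real assumes "0 < c" shows "2*x*y \<le> c*x\<^sup>2 + y\<^sup>2/c"
proof -
  have "0 \<le> (c*x - y)\<^sup>2" by simp
  then have "2*c*x*y \<le> c*(c*x\<^sup>2) + y\<^sup>2" by (simp add: power2_eq_square algebra_simps)
  then have "c*(2*x*y) \<le> c*(c*x\<^sup>2 + y\<^sup>2/c)" using assms by (simp add: algebra_simps)
  then show ?thesis using assms by (simp add: mult_le_cancel_left_pos)
qed

lemma sq_diff_le: fixes x y :: real shows "(x - y)\<^sup>2 \<le> 2*x\<^sup>2 + 2*y\<^sup>2"
proof -
  have "0 \<le> (x + y)\<^sup>2" by simp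
  then show ?thesis by (simp add: power2_eq_square algebra_simps)
qed



lemma energy_core:
  fixes e :: "nat \<Rightarrow> 'a::{real_inner,complete_space}" and w :: "real \<Rightarrow> 'a"
    and \<phi> :: "real \<Rightarrow> nat \<Rightarrow> real"
    and lam \<mu> :: "nat \<Rightarrow> real" and \<alpha> L' b C\<phi> t :: real
  assumes basis: "orthonormal_basis e"
    and lampos: "\<And>n. lam n > 0" and lam0: "\<And>n. lam 0 \<le> lam n"
    and alpha: "\<alpha> < 1"
    and wc: "continuous_on {0..} w"
    and int: "\<And>n t. 0 \<le> t \<Longrightarrow> ((\<lambda>s. - \<mu> n * inner (w s) (e n) + \<phi> s n) has_integral
                  (inner (w t) (e n) - inner (w 0) (e n))) {0..t}"
    and wHs: "\<And>s. s > 0 \<Longrightarrow> summable (\<lambda>n. lam n powr \<alpha> * (inner (w s) (e n))\<^sup>2)"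
    and \<phi>sum: "\<And>s. s > 0 \<Longrightarrow> summable (\<lambda>n. lam n powr (-\<alpha>) * (\<phi> s n)\<^sup>2)"
    and lip: "\<And>s. s > 0 \<Longrightarrow> (\<Sum>n. lam n powr (-\<alpha>) * (\<phi> s n)\<^sup>2)
                  \<le> L'\<^sup>2 * (\<Sum>n. lam n powr \<alpha> * (inner (w s) (e n))\<^sup>2)"
    and bdd: "\<And>s. s > 0 \<Longrightarrow> (\<Sum>n. lam n powr (-\<alpha>) * (\<phi> s n)\<^sup>2) \<le> C\<phi>"
    and coef: "\<And>n. b \<le> \<mu> n - L' * lam n powr \<alpha>"
    and \<mu>ge: "\<And>n. lam n \<le> \<mu> n"
    and L'pos: "L' > 0" and bpos: "b > 0"
    and t: "0 \<le> t"
  shows "norm (w t) \<le> norm (w 0) * exp (- b * t)"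
proof (cases "t = 0")
  case True then show ?thesis by simp
next
  case False
  with t have tpos: "t > 0" by simp
  have on: "\<And>m n. inner (e m) (e n) = (if m = n then 1 else 0)"
    using basis unfolding orthonormal_basis_def by auto
  have ne: "norm (e n) = 1" for n using on[of n n] by (simp add: norm_eq_sqrt_inner)
  define a where "a = (\<lambda>n s. inner (w s) (e n))"
  have wct: "continuous_on {0..t} w" by (rule continuous_on_subset[OF wc]) auto
  have ac: "continuous_on {0..t} (a n)" for n
    unfolding a_def by (intro continuous_intros wct)
  obtain R where R: "\<And>s. s \<in> {0..t} \<Longrightarrow> norm (w s) \<le> R"
    using compact_imp_bounded[OF compact_continuous_image[OF wct compact_Icc]]
    unfolding bounded_iff by force
  have R0: "0 \<le> R" using R[of 0] t by (auto intro: order_trans[OF norm_ge_zero])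
  have abnd: "\<bar>a n s\<bar> \<le> R" if "s \<in> {0..t}" for n s
  proof -
    have "\<bar>a n s\<bar> \<le> norm (w s) * norm (e n)" unfolding a_def by (rule Cauchy_Schwarz_ineq2)
    then show ?thesis using R[OF that] ne by simp
  qed
  have C\<phi>0: "0 \<le> C\<phi>"
    using bdd[of t] tpos suminf_nonneg[OF \<phi>sum[OF tpos]] by auto
  have \<phi>bnd: "\<bar>\<phi> s n\<bar> \<le> sqrt (C\<phi> * lam n powr \<alpha>)" if "s > 0" for s n
  proof -
    have "lam n powr (-\<alpha>) * (\<phi> s n)\<^sup>2 \<le> (\<Sum>n. lam n powr (-\<alpha>) * (\<phi> s n)\<^sup>2)"
      using sum_le_suminf[OF \<phi>sum[OF that], of "{n}"] by simp
    also have "\<dots> \<le> C\<phi>" by (rule bdd[OF that])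
    finally have "lam n powr \<alpha> * (lam n powr (-\<alpha>) * (\<phi> s n)\<^sup>2) \<le> lam n powr \<alpha> * C\<phi>"
      by (rule mult_left_mono) simp
    moreover have "lam n powr \<alpha> * lam n powr (-\<alpha>) = 1"
      using lampos[of n] by (simp add: powr_minus)
    ultimately have "(\<phi> s n)\<^sup>2 \<le> C\<phi> * lam n powr \<alpha>" by (metis mult.assoc mult.commute mult_1)
    then have "sqrt ((\<phi> s n)\<^sup>2) \<le> sqrt (C\<phi> * lam n powr \<alpha>)" by (rule real_sqrt_le_mono)
    then show ?thesis by simp
  qed
  define \<psi> where "\<psi> = (\<lambda>n s. if s = 0 then 0 else - \<mu> n * a n s + \<phi> s n)"
  have \<psi>int: "(\<psi> n has_integral (a n t' - a n r)) {r..t'}" if rt: "0 \<le> r" "r \<le> t'" for n r t'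
  proof -
    have "((\<lambda>s. - \<mu> n * a n s + \<phi> s n) has_integral (a n t' - a n r)) {r..t'}"
      by (rule has_integral_from0[where F="a n"]) (use int rt in \<open>auto simp: a_def\<close>)
    moreover have "((\<lambda>s. - \<mu> n * a n s + \<phi> s n) has_integral (a n t' - a n r)) {r..t'}
       \<longleftrightarrow> (\<psi> n has_integral (a n t' - a n r)) {r..t'}"
      by (rule has_integral_spike_finite_eq[of "{0}"]) (auto simp: \<psi>_def)
    ultimately show ?thesis by blast
  qed
  have \<psi>bnd: "\<bar>\<psi> n s\<bar> \<le> \<mu> n * R + sqrt (C\<phi> * lam n powr \<alpha>)" if "s \<in> {0..t}" for n s
  proof (cases "s = 0")
    case True
    have "0 \<le> \<mu> n" using \<mu>ge[of n] lampos[of n] by linarith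
    moreover have "0 \<le> sqrt (C\<phi> * lam n powr \<alpha>)" using C\<phi>0 by simp
    ultimately show ?thesis using True R0 by (simp add: \<psi>_def)
  next
    case False
    then have sp: "s > 0" using that by auto
    have m: "0 \<le> \<mu> n" using \<mu>ge[of n] lampos[of n] by linarith
    have "\<bar>- \<mu> n * a n s + \<phi> s n\<bar> \<le> \<mu> n * \<bar>a n s\<bar> + \<bar>\<phi> s n\<bar>"
      using m abs_triangle_ineq[of "- \<mu> n * a n s" "\<phi> s n"] by (simp add: abs_mult)
    also have "\<dots> \<le> \<mu> n * R + sqrt (C\<phi> * lam n powr \<alpha>)"
      by (intro add_mono mult_left_mono abnd that \<phi>bnd sp m)
    finally show ?thesis using False by (simp add: \<psi>_def)
  qed
  define wt where "wt = (\<lambda>s. exp (2 * b * s))"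
  have wt0: "wt 0 = 1" by (simp add: wt_def)
  have wtc: "continuous_on S wt" for S unfolding wt_def by (intro continuous_intros)
  have exint: "((\<lambda>s. 2*b*wt s) has_integral (wt t' - wt r)) {r..t'}" if "r \<le> t'" for r t'
  proof (rule fundamental_theorem_of_calculus[OF that])
    fix x assume "x \<in> {r..t'}"
    have "(wt has_real_derivative (2*b*wt x)) (at x within {r..t'})"
      unfolding wt_def by (auto intro!: derivative_eq_intros)
    then show "(wt has_vector_derivative (2*b*wt x)) (at x within {r..t'})"
      by (simp add: has_real_derivative_iff_has_vector_derivative)
  qed
  have exle: "wt s \<le> wt t" if "s \<le> t" for s using that bpos by (simp add: wt_def)
  have expos: "wt s > 0" for s by (simp add: wt_def)
  define B\<psi> where "B\<psi> = (\<lambda>n. \<mu> n * R + sqrt (C\<phi> * lam n powr \<alpha>))"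
  have B\<psi>0: "0 \<le> B\<psi> n" for n using \<psi>bnd[of 0 n] t unfolding B\<psi>_def by auto
  have cint: "((\<lambda>s. wt s * \<psi> n s + a n s * (2*b*wt s)) has_integral (a n t' * wt t' - a n r * wt r)) {r..t'}"
    if rt: "0 \<le> r" "r \<le> t'" "t' \<le> t" for n r t'
  proof (rule prod_rule[where B="max (B\<psi> n) (2*b*wt t)"])
    show "r \<le> t'" by fact
    show "continuous_on {r..t'} (a n)" by (rule continuous_on_subset[OF ac]) (use rt in auto)
    show "continuous_on {r..t'} wt" by (rule wtc)
    show "(\<psi> n has_integral a n t2 - a n r2) {r2..t2}" if "r \<le> r2" "r2 \<le> t2" "t2 \<le> t'" for r2 t2
      by (rule \<psi>int) (use that rt in auto)
    show "((\<lambda>s. 2*b*wt s) has_integral wt t2 - wt r2) {r2..t2}" if "r \<le> r2" "r2 \<le> t2" "t2 \<le> t'" for r2 t2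
      by (rule exint) (use that in auto)
    show "\<bar>\<psi> n s\<bar> \<le> max (B\<psi> n) (2*b*wt t)" if "s \<in> {r..t'}" for s
      using \<psi>bnd[of s n] that rt unfolding B\<psi>_def by auto
    show "\<bar>2*b*wt s\<bar> \<le> max (B\<psi> n) (2*b*wt t)" if "s \<in> {r..t'}" for s
    proof -
      have "2*b*wt s \<le> 2*b*wt t" using exle[of s] bpos that rt by (intro mult_left_mono) auto
      moreover have "0 \<le> 2*b*wt s" using expos[of s] bpos by simp
      ultimately show ?thesis by linarith
    qed
  qed
  define B2 where "B2 = (\<lambda>n. max (B\<psi> n) (wt t * B\<psi> n + R * (2*b*wt t)))"
  define J where "J = (\<lambda>n s. wt s * (2*b*(a n s)\<^sup>2 + 2*(a n s)*\<psi> n s))"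
  have Jint: "(J n has_integral (wt t * (a n t)\<^sup>2 - (a n 0)\<^sup>2)) {0..t}" for n
  proof -
    have "((\<lambda>s. (wt s * a n s) * \<psi> n s + a n s * (wt s * \<psi> n s + a n s * (2*b*wt s))) has_integral
           (a n t * (wt t * a n t) - a n 0 * (wt 0 * a n 0))) {0..t}"
    proof (rule prod_rule[where B="B2 n"])
      show "0 \<le> t" by fact
      show "continuous_on {0..t} (a n)" by (rule ac)
      show "continuous_on {0..t} (\<lambda>s. wt s * a n s)" by (intro continuous_intros wtc ac)
      show "(\<psi> n has_integral a n t2 - a n r2) {r2..t2}" if "0 \<le> r2" "r2 \<le> t2" "t2 \<le> t" for r2 t2
        by (rule \<psi>int) (use that in auto)
      show "((\<lambda>s. wt s * \<psi> n s + a n s * (2*b*wt s)) has_integral wt t2 * a n t2 - wt r2 * a n r2) {r2..t2}"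
        if "0 \<le> r2" "r2 \<le> t2" "t2 \<le> t" for r2 t2
        using cint[OF that, of n] by (simp add: mult.commute)
      show "\<bar>\<psi> n s\<bar> \<le> B2 n" if "s \<in> {0..t}" for s
        using \<psi>bnd[OF that, of n] unfolding B2_def B\<psi>_def by auto
      show "\<bar>wt s * \<psi> n s + a n s * (2*b*wt s)\<bar> \<le> B2 n" if s: "s \<in> {0..t}" for s
      proof -
        have "\<bar>wt s * \<psi> n s\<bar> \<le> wt t * B\<psi> n"
          unfolding abs_mult using exle[of s] expos[of s] s \<psi>bnd[OF s, of n] B\<psi>0[of n]
          by (intro mult_mono) (auto simp: B\<psi>_def)
        moreover have "\<bar>a n s * (2*b*wt s)\<bar> \<le> R * (2*b*wt t)"
          unfolding abs_mult using exle[of s] expos[of s] s abnd[OF s, of n] bpos R0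
          by (intro mult_mono) auto
        ultimately show ?thesis unfolding B2_def
          using abs_triangle_ineq[of "wt s * \<psi> n s" "a n s * (2*b*wt s)"] by linarith
      qed
    qed
    moreover have "(\<lambda>s. (wt s * a n s) * \<psi> n s + a n s * (wt s * \<psi> n s + a n s * (2*b*wt s))) = J n"
      by (auto simp: J_def power2_eq_square algebra_simps)
    moreover have "a n t * (wt t * a n t) - a n 0 * (wt 0 * a n 0) = wt t * (a n t)\<^sup>2 - (a n 0)\<^sup>2"
      by (simp add: wt0 power2_eq_square algebra_simps)
    ultimately show ?thesis by simp
  qed
  define E where "E = (\<lambda>M s. \<Sum>n<M. (a n s)\<^sup>2)"
  define I where "I = (\<lambda>M s. \<Sum>n<M. J n s)"
  have Iint: "(I M has_integral (wt t * E M t - E M 0)) {0..t}" for M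
  proof -
    have "((\<lambda>s. \<Sum>n<M. J n s) has_integral (\<Sum>n<M. wt t * (a n t)\<^sup>2 - (a n 0)\<^sup>2)) {0..t}"
      by (rule has_integral_sum) (auto intro: Jint)
    then show ?thesis by (simp add: I_def E_def sum_subtractf sum_distrib_left)
  qed
  define W where "W = (\<lambda>s. \<Sum>n. lam n powr \<alpha> * (a n s)\<^sup>2)"
  define Y where "Y = (\<lambda>s. \<Sum>n. lam n powr (-\<alpha>) * (\<phi> s n)\<^sup>2)"
  define T where "T = (\<lambda>M s. W s - (\<Sum>n<M. lam n powr \<alpha> * (a n s)\<^sup>2))"
  have Isplit: "I M s = wt s * (\<Sum>n<M. (2*b - 2*\<mu> n) * (a n s)\<^sup>2 + 2 * a n s * \<phi> s n)" if "s > 0" for M s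
    using that by (simp add: I_def J_def \<psi>_def sum_distrib_left power2_eq_square algebra_simps)
  have wpos: "lam n powr \<alpha> > 0" for n using lampos[of n] by simp
  have wi: "lam n powr (-\<alpha>) = 1 / lam n powr \<alpha>" for n by (simp add: powr_minus_divide)
  have Ysum: "summable (\<lambda>n. lam n powr (-\<alpha>) * (\<phi> s n)\<^sup>2)" if "s > 0" for s using \<phi>sum[OF that] .
  have Wsum: "summable (\<lambda>n. lam n powr \<alpha> * (a n s)\<^sup>2)" if "s > 0" for s using wHs[OF that] by (simp add: a_def)
  have Ypart: "(\<Sum>n<M. lam n powr (-\<alpha>) * (\<phi> s n)\<^sup>2) \<le> Y s" if "s > 0" for M s
    unfolding Y_def by (rule sum_le_suminf[OF Ysum[OF that]]) auto
  have Ibnd1: "I M s \<le> wt s * (L' * T M s)" if s: "0 < s" for M s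
  proof -
    have trm: "(2*b - 2*\<mu> n) * (a n s)\<^sup>2 + 2 * a n s * \<phi> s n
        \<le> - L' * (lam n powr \<alpha> * (a n s)\<^sup>2) + (lam n powr (-\<alpha>) * (\<phi> s n)\<^sup>2) / L'" for n
    proof -
      have c: "0 < L' * lam n powr \<alpha>" using L'pos wpos[of n] by simp
      have "2 * a n s * \<phi> s n \<le> (L' * lam n powr \<alpha>) * (a n s)\<^sup>2 + (\<phi> s n)\<^sup>2 / (L' * lam n powr \<alpha>)"
        by (rule amgm[OF c])
      also have "(\<phi> s n)\<^sup>2 / (L' * lam n powr \<alpha>) = (lam n powr (-\<alpha>) * (\<phi> s n)\<^sup>2) / L'"
        by (simp add: wi)
      finally have 1: "2 * a n s * \<phi> s n \<le> (L' * lam n powr \<alpha>) * (a n s)\<^sup>2 + (lam n powr (-\<alpha>) * (\<phi> s n)\<^sup>2) / L'" .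
      have "(2*b - 2*\<mu> n) \<le> - 2 * (L' * lam n powr \<alpha>)" using coef[of n] by simp
      then have 2: "(2*b - 2*\<mu> n) * (a n s)\<^sup>2 \<le> - 2 * (L' * lam n powr \<alpha>) * (a n s)\<^sup>2"
        by (intro mult_right_mono) auto
      show ?thesis using 1 2 by (simp add: algebra_simps)
    qed
    have "(\<Sum>n<M. (2*b - 2*\<mu> n) * (a n s)\<^sup>2 + 2 * a n s * \<phi> s n)
        \<le> (\<Sum>n<M. - L' * (lam n powr \<alpha> * (a n s)\<^sup>2) + (lam n powr (-\<alpha>) * (\<phi> s n)\<^sup>2) / L')"
      by (rule sum_mono) (rule trm)
    also have "\<dots> = - L' * (\<Sum>n<M. lam n powr \<alpha> * (a n s)\<^sup>2) + (\<Sum>n<M. lam n powr (-\<alpha>) * (\<phi> s n)\<^sup>2) / L'"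
      by (simp add: sum.distrib sum_distrib_left sum_divide_distrib sum_negf sum_subtractf)
    also have "\<dots> \<le> - L' * (\<Sum>n<M. lam n powr \<alpha> * (a n s)\<^sup>2) + Y s / L'"
      using Ypart[OF s, of M] L'pos by (simp add: divide_right_mono)
    also have "Y s / L' \<le> L' * W s"
    proof -
      have "Y s \<le> L'\<^sup>2 * W s" using lip[OF s] by (simp add: Y_def W_def a_def)
      moreover have "L'\<^sup>2 * W s = (L' * W s) * L'" by (simp add: power2_eq_square ac_simps)
      ultimately show ?thesis using L'pos by (simp add: pos_divide_le_eq)
    qed
    finally have "(\<Sum>n<M. (2*b - 2*\<mu> n) * (a n s)\<^sup>2 + 2 * a n s * \<phi> s n) \<le> L' * T M s"
      by (simp add: T_def algebra_simps)
    then show ?thesis using Isplit[OF s] expos[of s] by (simp add: mult_left_mono)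
  qed
  define c1 where "c1 = lam 0 powr (\<alpha> - 1)"
  define Bd where "Bd = wt t * (2*b*R\<^sup>2 + c1 * C\<phi>)"
  have c10: "0 \<le> c1" by (simp add: c1_def)
  have Bd0: "0 \<le> Bd" unfolding Bd_def using expos[of t] bpos c10 C\<phi>0 by simp
  have ER: "E M s \<le> R\<^sup>2" if s: "s \<in> {0..t}" for M s
  proof -
    have ps: "(\<lambda>n. (a n s)\<^sup>2) sums (norm (w s))\<^sup>2" using parseval[OF basis] by (simp add: a_def)
    have "E M s \<le> (\<Sum>n. (a n s)\<^sup>2)" unfolding E_def
      by (rule sum_le_suminf[OF sums_summable[OF ps]]) auto
    also have "\<dots> = (norm (w s))\<^sup>2" using ps by (simp add: sums_iff)
    also have "\<dots> \<le> R\<^sup>2" using R[OF s] by (simp add: power_mono)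
    finally show ?thesis .
  qed
  have Ibnd2: "I M s \<le> Bd" if s: "0 < s" "s \<le> t" for M s
  proof -
    have trm: "(2*b - 2*\<mu> n) * (a n s)\<^sup>2 + 2 * a n s * \<phi> s n
        \<le> 2*b*(a n s)\<^sup>2 + c1 * (lam n powr (-\<alpha>) * (\<phi> s n)\<^sup>2)" for n
    proof -
      have 1: "2 * a n s * \<phi> s n \<le> lam n * (a n s)\<^sup>2 + (\<phi> s n)\<^sup>2 / lam n"
        by (rule amgm[OF lampos])
      have "1 / lam n = lam n powr (-\<alpha>) * lam n powr (\<alpha> - 1)"
        using lampos[of n] by (simp add: powr_add[symmetric] powr_neg_one)
      also have "\<dots> \<le> lam n powr (-\<alpha>) * c1"
        unfolding c1_def by (intro mult_left_mono powr_mono2') (use alpha lampos lam0 in auto)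
      finally have "(1 / lam n) * (\<phi> s n)\<^sup>2 \<le> (lam n powr (-\<alpha>) * c1) * (\<phi> s n)\<^sup>2"
        by (rule mult_right_mono) simp
      then have "(\<phi> s n)\<^sup>2 / lam n \<le> c1 * (lam n powr (-\<alpha>) * (\<phi> s n)\<^sup>2)"
        by (simp add: ac_simps)
      moreover have "(2*b - 2*\<mu> n) * (a n s)\<^sup>2 + lam n * (a n s)\<^sup>2 \<le> 2*b*(a n s)\<^sup>2"
      proof -
        have "(2*b - 2*\<mu> n + lam n) \<le> 2*b" using \<mu>ge[of n] lampos[of n] by linarith
        then have "(2*b - 2*\<mu> n + lam n) * (a n s)\<^sup>2 \<le> 2*b*(a n s)\<^sup>2" by (intro mult_right_mono) auto
        then show ?thesis by (simp add: algebra_simps)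
      qed
      ultimately show ?thesis using 1 by linarith
    qed
    have "(\<Sum>n<M. (2*b - 2*\<mu> n) * (a n s)\<^sup>2 + 2 * a n s * \<phi> s n)
        \<le> (\<Sum>n<M. 2*b*(a n s)\<^sup>2 + c1 * (lam n powr (-\<alpha>) * (\<phi> s n)\<^sup>2))"
      by (rule sum_mono) (rule trm)
    also have "\<dots> = 2*b*E M s + c1 * (\<Sum>n<M. lam n powr (-\<alpha>) * (\<phi> s n)\<^sup>2)"
      by (simp add: E_def sum.distrib sum_distrib_left)
    also have "\<dots> \<le> 2*b*R\<^sup>2 + c1 * C\<phi>"
    proof (intro add_mono mult_left_mono)
      show "E M s \<le> R\<^sup>2" using ER[of s M] s by auto
      show "(\<Sum>n<M. lam n powr (-\<alpha>) * (\<phi> s n)\<^sup>2) \<le> C\<phi>"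
        using Ypart[OF s(1), of M] bdd[OF s(1)] by (simp add: Y_def)
    qed (use bpos c10 in auto)
    finally have "I M s \<le> wt s * (2*b*R\<^sup>2 + c1 * C\<phi>)"
      using Isplit[OF s(1)] expos[of s] by (simp add: mult_left_mono)
    also have "\<dots> \<le> Bd" unfolding Bd_def
      using exle[OF s(2)] bpos c10 C\<phi>0 by (intro mult_right_mono) auto
    finally show ?thesis .
  qed
  define p where "p = (\<lambda>M s. if s = 0 then 0 else max 0 (I M s))"
  have Iint': "I M integrable_on {0..t}" for M using Iint[of M] by blast
  have pbnd: "\<bar>p M s\<bar> \<le> Bd" if "s \<in> {0..t}" for M s
    using Ibnd2[of s M] that Bd0 by (auto simp: p_def)
  have qint: "(\<lambda>s. max 0 (I M s)) integrable_on {0..t}" for M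
  proof (rule measurable_bounded_by_integrable_imp_integrable_real)
    have m: "I M \<in> borel_measurable (lebesgue_on {0..t})" by (rule integrable_imp_measurable[OF Iint'])
    show "(\<lambda>s. max 0 (I M s)) \<in> borel_measurable (lebesgue_on {0..t})"
      using m by measurable
    show "(\<lambda>s. Bd + max 0 (I M 0)) integrable_on {0..t}"
      by (rule integrable_continuous_interval) (rule continuous_on_const)
    show "\<bar>max 0 (I M s)\<bar> \<le> Bd + max 0 (I M 0)" if "s \<in> {0..t}" for s
      using Ibnd2[of s M] that Bd0 by (cases "s = 0") auto
  qed auto
  have pint: "p M integrable_on {0..t}" for M
    by (rule integrable_spike_finite[of "{0}" _ _ "\<lambda>s. max 0 (I M s)"]) (use qint in \<open>auto simp: p_def\<close>)
  have Tnn: "0 \<le> T M s" if "s > 0" for M s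
    using sum_le_suminf[OF Wsum[OF that], of "{..<M}"] wpos by (auto simp: T_def W_def)
  have Tlim: "(\<lambda>M. T M s) \<longlonglongrightarrow> 0" if "s > 0" for s
  proof -
    have "(\<lambda>M. \<Sum>n<M. lam n powr \<alpha> * (a n s)\<^sup>2) \<longlonglongrightarrow> W s"
      unfolding W_def by (rule summable_LIMSEQ[OF Wsum[OF that]])
    then have "(\<lambda>M. W s - (\<Sum>n<M. lam n powr \<alpha> * (a n s)\<^sup>2)) \<longlonglongrightarrow> W s - W s"
      by (intro tendsto_diff tendsto_const)
    then show ?thesis by (simp add: T_def)
  qed
  have pconv: "(\<lambda>M. p M s) \<longlonglongrightarrow> 0" if "s \<in> {0..t}" for s
  proof (cases "s = 0")
    case True then show ?thesis by (simp add: p_def)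
  next
    case False
    then have sp: "s > 0" using that by auto
    have "(\<lambda>M. wt s * (L' * T M s)) \<longlonglongrightarrow> wt s * (L' * 0)"
      by (intro tendsto_mult tendsto_const Tlim[OF sp])
    then have up: "(\<lambda>M. wt s * (L' * T M s)) \<longlonglongrightarrow> 0" by simp
    show ?thesis
    proof (rule tendsto_sandwich[OF _ _ tendsto_const up])
      show "\<forall>\<^sub>F M in sequentially. 0 \<le> p M s" by (simp add: p_def)
      show "\<forall>\<^sub>F M in sequentially. p M s \<le> wt s * (L' * T M s)"
      proof (rule always_eventually, rule allI)
        fix M
        have "0 \<le> wt s * (L' * T M s)" using expos[of s] L'pos Tnn[OF sp, of M] by simp
        then show "p M s \<le> wt s * (L' * T M s)" using Ibnd1[OF sp, of M] False by (simp add: p_def)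
      qed
    qed
  qed
  have plim: "(\<lambda>M. integral {0..t} (p M)) \<longlonglongrightarrow> integral {0..t} (\<lambda>s. 0::real)"
    by (rule dominated_convergence(2)[where h="\<lambda>s. Bd"])
       (use pint pbnd pconv in \<open>auto intro: integrable_continuous_interval continuous_on_const\<close>)
  then have plim0: "(\<lambda>M. integral {0..t} (p M)) \<longlonglongrightarrow> 0" by simp
  have le: "wt t * E M t - E M 0 \<le> integral {0..t} (p M)" for M
  proof -
    have "((\<lambda>s. if s = 0 then 0 else I M s) has_integral (wt t * E M t - E M 0)) {0..t}"
    proof -
      have "(I M has_integral (wt t * E M t - E M 0)) {0..t} \<longleftrightarrow>
            ((\<lambda>s. if s = 0 then 0 else I M s) has_integral (wt t * E M t - E M 0)) {0..t}"
        by (rule has_integral_spike_finite_eq[of "{0}"]) auto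
      then show ?thesis using Iint by blast
    qed
    moreover have "(p M has_integral integral {0..t} (p M)) {0..t}"
      using pint[of M] by (simp add: has_integral_integral)
    ultimately show ?thesis
      by (rule has_integral_le) (auto simp: p_def)
  qed
  have Elim: "(\<lambda>M. E M s) \<longlonglongrightarrow> (norm (w s))\<^sup>2" for s
    using parseval[OF basis, of "w s"] by (simp add: sums_def E_def a_def)
  have "(\<lambda>M. wt t * E M t - E M 0) \<longlonglongrightarrow> wt t * (norm (w t))\<^sup>2 - (norm (w 0))\<^sup>2"
    by (intro tendsto_diff tendsto_mult tendsto_const Elim)
  then have fin: "wt t * (norm (w t))\<^sup>2 - (norm (w 0))\<^sup>2 \<le> 0"
    by (rule tendsto_le[OF trivial_limit_sequentially plim0]) (use le in auto)
  have "(norm (w t))\<^sup>2 \<le> (norm (w 0) * exp (- b * t))\<^sup>2"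
  proof -
    have e: "exp (- b * t) ^ 2 * wt t = 1"
      by (simp add: wt_def power2_eq_square exp_add[symmetric])
    have "(norm (w t))\<^sup>2 = exp (- b * t) ^ 2 * (wt t * (norm (w t))\<^sup>2)"
      using e by (simp add: ac_simps)
    also have "\<dots> \<le> exp (- b * t) ^ 2 * (norm (w 0))\<^sup>2"
      using fin by (intro mult_left_mono) auto
    finally show ?thesis by (simp add: power_mult_distrib ac_simps)
  qed
  then show ?thesis by (rule power2_le_imp_le) simp
qed



lemma summable_diff_sq:
  fixes c x y :: "nat \<Rightarrow> real"
  assumes sx: "summable (\<lambda>n. c n * (x n)\<^sup>2)" and sy: "summable (\<lambda>n. c n * (y n)\<^sup>2)"
    and c: "\<And>n. 0 \<le> c n"
  shows "summable (\<lambda>n. c n * (x n - y n)\<^sup>2)"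
    "(\<Sum>n. c n * (x n - y n)\<^sup>2) \<le> 2 * (\<Sum>n. c n * (x n)\<^sup>2) + 2 * (\<Sum>n. c n * (y n)\<^sup>2)"
proof -
  have s2: "summable (\<lambda>n. 2 * (c n * (x n)\<^sup>2) + 2 * (c n * (y n)\<^sup>2))"
    by (intro summable_add summable_mult sx sy)
  have le: "c n * (x n - y n)\<^sup>2 \<le> 2 * (c n * (x n)\<^sup>2) + 2 * (c n * (y n)\<^sup>2)" for n
  proof -
    have "c n * (x n - y n)\<^sup>2 \<le> c n * (2 * (x n)\<^sup>2 + 2 * (y n)\<^sup>2)"
      by (rule mult_left_mono[OF sq_diff_le c])
    then show ?thesis by (simp add: algebra_simps)
  qed
  show s1: "summable (\<lambda>n. c n * (x n - y n)\<^sup>2)"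
    by (rule summable_comparison_test[OF _ s2]) (use le c in auto)
  have "(\<Sum>n. c n * (x n - y n)\<^sup>2) \<le> (\<Sum>n. 2 * (c n * (x n)\<^sup>2) + 2 * (c n * (y n)\<^sup>2))"
    by (rule suminf_le[OF le s1 s2])
  also have "\<dots> = 2 * (\<Sum>n. c n * (x n)\<^sup>2) + 2 * (\<Sum>n. c n * (y n)\<^sup>2)"
    using sx sy by (simp add: suminf_add[symmetric] suminf_mult summable_mult)
  finally show "(\<Sum>n. c n * (x n - y n)\<^sup>2) \<le> 2 * (\<Sum>n. c n * (x n)\<^sup>2) + 2 * (\<Sum>n. c n * (y n)\<^sup>2)" .
qed

lemma sqrt_le_sq: fixes x C :: real assumes "sqrt x \<le> C" "0 \<le> x" shows "x \<le> C\<^sup>2"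
proof -
  have "(sqrt x)\<^sup>2 \<le> C\<^sup>2" by (rule power_mono) (use assms in auto)
  then show ?thesis using assms by simp
qed


theorem proposition4p7:
  fixes e :: "nat \<Rightarrow> 'a::{real_inner,complete_space}"
    and lam :: "nat \<Rightarrow> real"
    and \<alpha> C L \<tau> :: real
    and f :: "'a \<Rightarrow> nat \<Rightarrow> real"
    and g :: "nat \<Rightarrow> real"
    and S :: "real \<Rightarrow> 'a \<Rightarrow> 'a"
    and \<A> :: "'a set"
    and N k :: nat
    and F :: "'a \<Rightarrow> real"
    and ThetaN :: "(nat \<Rightarrow> real) \<Rightarrow> 'a"
  assumes basis: "orthonormal_basis e"
    and lam_pos: "lam 0 > 0" and lam_mono: "mono lam" and lam_inf: "filterlim lam at_top sequentially"
    and alpha: "0 \<le> \<alpha>" "\<alpha> < 1"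
    and f_maps: "\<forall>u\<in>Hs lam e \<alpha>. f u \<in> Hneg lam \<alpha>"
    and f_bdd: "\<forall>u\<in>Hs lam e \<alpha>. Hneg_norm lam \<alpha> (f u) \<le> C"
    and f_lip: "\<forall>u1\<in>Hs lam e \<alpha>. \<forall>u2\<in>Hs lam e \<alpha>.
                  Hneg_norm lam \<alpha> (\<lambda>n. f u1 n - f u2 n) \<le> L * Hs_norm lam e \<alpha> (u1 - u2)"
    and g_in: "g \<in> Hneg lam \<alpha>"
    and equil_fin: "finite (equilibria lam e \<alpha> f g)"
    and semigroup: "solution_semigroup lam e \<alpha> f g S"
    and attractor: "global_attractor S \<A>"
    and N_gap: "L < lam N powr (1 - \<alpha>)"
    and F_cont: "continuous_on UNIV F"
    and tau_pos: "\<tau> > 0"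
    and F_inj: "inj_on (Fk F S \<tau> k) \<A>"
    and ThetaN_cont: "continuous_on (Rk k) ThetaN"
    and ThetaN_range: "\<forall>\<xi>\<in>Rk k. ThetaN \<xi> \<in> range (PN e N)"
    and ThetaN_ext: "\<forall>\<xi>\<in>Fk F S \<tau> k ` \<A>.
                       ThetaN \<xi> = PN e N (S (real k * \<tau>) (the_inv_into \<A> (Fk F S \<tau> k) \<xi>))"
  shows "\<exists>\<beta> :: real \<Rightarrow> real. \<forall>u. complete_trajectory S \<A> u \<longrightarrow>
           (\<exists>K0. \<forall>K>K0. \<beta> K > 0 \<and>
              (\<forall>v. weak_sol lam e \<alpha>
                     (\<lambda>s n. f (v s) n + g n
                        - K * inner (PN e N (v s)
                              - ThetaN (\<lambda>j. if j < k then F (u (s - real k * \<tau> + real j * \<tau>)) else 0))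
                            (e n)) v
                   \<longrightarrow> (\<forall>t\<ge>0. norm (v t - u t) \<le> norm (v 0 - u 0) * exp (- \<beta> K * t))))"
proof -
  have on: "\<And>m n. inner (e m) (e n) = (if m = n then 1 else 0)"
    using basis unfolding orthonormal_basis_def by auto
  have lampos: "\<And>n. lam n > 0" using lam_mono lam_pos by (metis le0 monoD less_le_trans)
  have lam0: "\<And>n. lam 0 \<le> lam n" using lam_mono by (simp add: monoD)
  define lN where "lN = lam N"
  have lNpos: "lN > 0" using lampos by (simp add: lN_def)
  have g1: "0 < lN powr (1 - \<alpha>)" using lNpos by simp
  define L' where "L' = (max L 0 + lN powr (1 - \<alpha>)) / 2"
  have Lg: "L < lN powr (1 - \<alpha>)" using N_gap by (simp add: lN_def)
  have m1: "max L 0 < lN powr (1 - \<alpha>)" using Lg g1 by simp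
  have m2: "0 \<le> max L 0" "L \<le> max L 0" by auto
  have gen: "\<And>M G::real. 0 \<le> M \<Longrightarrow> M < G \<Longrightarrow> L \<le> M \<Longrightarrow> 0 < (M+G)/2 \<and> L \<le> (M+G)/2 \<and> (M+G)/2 < G"
    by (auto simp: field_simps)
  have L'pos: "L' > 0" and L'ge: "L \<le> L'" and L'lt: "L' < lN powr (1 - \<alpha>)"
    using gen[OF m2(1) m1 m2(2)] unfolding L'_def by auto
  define c0 where "c0 = lN powr \<alpha> * (lN powr (1 - \<alpha>) - L')"
  have c0pos: "c0 > 0" using lNpos L'lt by (simp add: c0_def)
  define K0 where "K0 = L' * lN powr \<alpha>"
  have K0pos: "K0 > 0" using L'pos lNpos by (simp add: K0_def)
  define \<beta> where "\<beta> = (\<lambda>K::real. min c0 (K - K0))"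
  show ?thesis
  proof (intro exI[of _ \<beta>] allI impI)
    fix u assume ct: "complete_trajectory S \<A> u"
    show "\<exists>K0. \<forall>K>K0. \<beta> K > 0 \<and>
              (\<forall>v. weak_sol lam e \<alpha>
                     (\<lambda>s n. f (v s) n + g n
                        - K * inner (PN e N (v s)
                              - ThetaN (\<lambda>j. if j < k then F (u (s - real k * \<tau> + real j * \<tau>)) else 0))
                            (e n)) v
                   \<longrightarrow> (\<forall>t\<ge>0. norm (v t - u t) \<le> norm (v 0 - u 0) * exp (- \<beta> K * t)))"
    proof (intro exI[of _ K0] allI impI conjI)
      fix K :: real assume KK: "K > K0"
      show bpos: "\<beta> K > 0" using KK c0pos by (simp add: \<beta>_def)
      fix v and t :: real
      assume vsol: "weak_sol lam e \<alpha>
                     (\<lambda>s n. f (v s) n + g n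
                        - K * inner (PN e N (v s)
                              - ThetaN (\<lambda>j. if j < k then F (u (s - real k * \<tau> + real j * \<tau>)) else 0))
                            (e n)) v"
        and t: "0 \<le> t"
      define b where "b = \<beta> K"
      define \<mu> where "\<mu> = (\<lambda>n. lam n + (if n < N then K else 0))"
      have bpos': "b > 0" using KK c0pos by (simp add: b_def \<beta>_def)
      have Kpos: "K > 0" using KK K0pos by simp
      have usol: "weak_sol lam e \<alpha> (\<lambda>s n. f (S s (u 0)) n + g n) (\<lambda>t. S t (u 0))"
        using semigroup unfolding solution_semigroup_def sol_eq_def by blast
      have uS: "S s (u 0) = u s" if "0 \<le> s" for s
        using ct that unfolding complete_trajectory_def by (metis add.right_neutral)
      have uc: "continuous_on {0..} u"
      proof -
        have "continuous_on {0..} (\<lambda>t. S t (u 0))" using usol unfolding weak_sol_def by blast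
        then show ?thesis by (rule continuous_on_cong[THEN iffD1, rotated 2]) (auto simp: uS)
      qed
      have uHs: "u s \<in> Hs lam e \<alpha>" if "s > 0" for s
        using usol that uS[of s] unfolding weak_sol_def by auto
      have uint: "((\<lambda>s. - lam n * inner (u s) (e n) + (f (u s) n + g n)) has_integral
                    (inner (u t') (e n) - inner (u 0) (e n))) {0..t'}" if "0 \<le> t'" for n t'
      proof -
        have "((\<lambda>s. - lam n * inner (S s (u 0)) (e n) + (f (S s (u 0)) n + g n)) has_integral
                    (inner (S t' (u 0)) (e n) - inner (S 0 (u 0)) (e n))) {0..t'}"
          using usol that unfolding weak_sol_def by blast
        then show ?thesis using that
          by (subst has_integral_cong[where g="\<lambda>s. - lam n * inner (S s (u 0)) (e n) + (f (S s (u 0)) n + g n)"])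
             (auto simp: uS)
      qed
      have theta: "ThetaN (\<lambda>j. if j < k then F (u (s - real k * \<tau> + real j * \<tau>)) else 0) = PN e N (u s)" for s
      proof -
        define x where "x = u (s - real k * \<tau>)"
        have xA: "x \<in> \<A>" using ct unfolding complete_trajectory_def x_def by blast
        have Sx: "S r x = u (r + (s - real k * \<tau>))" if "0 \<le> r" for r
          using ct that unfolding complete_trajectory_def x_def by blast
        have arg: "(\<lambda>j. if j < k then F (u (s - real k * \<tau> + real j * \<tau>)) else 0) = Fk F S \<tau> k x"
        proof
          fix j
          have "S (real j * \<tau>) x = u (s - real k * \<tau> + real j * \<tau>)"
            using Sx[of "real j * \<tau>"] tau_pos by (simp add: add.commute)
          then show "(if j < k then F (u (s - real k * \<tau> + real j * \<tau>)) else 0) = Fk F S \<tau> k x j"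
            by (simp add: Fk_def)
        qed
        have "ThetaN (Fk F S \<tau> k x) = PN e N (S (real k * \<tau>) (the_inv_into \<A> (Fk F S \<tau> k) (Fk F S \<tau> k x)))"
          using ThetaN_ext xA by blast
        also have "the_inv_into \<A> (Fk F S \<tau> k) (Fk F S \<tau> k x) = x"
          by (rule the_inv_into_f_f[OF F_inj xA])
        also have "S (real k * \<tau>) x = u s" using Sx[of "real k * \<tau>"] tau_pos by simp
        finally show ?thesis using arg by simp
      qed
      have vc: "continuous_on {0..} v" and vHs: "\<And>s. s > 0 \<Longrightarrow> v s \<in> Hs lam e \<alpha>"
        using vsol unfolding weak_sol_def by auto
      have vint: "((\<lambda>s. - lam n * inner (v s) (e n) + (f (v s) n + g n - K * inner (PN e N (v s) - PN e N (u s)) (e n))) has_integral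
                    (inner (v t') (e n) - inner (v 0) (e n))) {0..t'}" if "0 \<le> t'" for n t'
        using vsol that unfolding weak_sol_def theta by blast
      have int: "((\<lambda>s. - \<mu> n * inner (v s - u s) (e n) + (f (v s) n - f (u s) n)) has_integral
                   (inner (v t' - u t') (e n) - inner (v 0 - u 0) (e n))) {0..t'}" if "0 \<le> t'" for n t'
      proof -
        have "((\<lambda>s. (- lam n * inner (v s) (e n) + (f (v s) n + g n - K * inner (PN e N (v s) - PN e N (u s)) (e n)))
                 - (- lam n * inner (u s) (e n) + (f (u s) n + g n))) has_integral
               ((inner (v t') (e n) - inner (v 0) (e n)) - (inner (u t') (e n) - inner (u 0) (e n)))) {0..t'}"
          by (rule has_integral_diff[OF vint[OF that] uint[OF that]])
        moreover have "(\<lambda>s. (- lam n * inner (v s) (e n) + (f (v s) n + g n - K * inner (PN e N (v s) - PN e N (u s)) (e n)))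
                 - (- lam n * inner (u s) (e n) + (f (u s) n + g n)))
              = (\<lambda>s. - \<mu> n * inner (v s - u s) (e n) + (f (v s) n - f (u s) n))"
          by (auto simp: inner_diff_left PN_coord[OF basis] \<mu>_def algebra_simps)
        moreover have "(inner (v t') (e n) - inner (v 0) (e n)) - (inner (u t') (e n) - inner (u 0) (e n))
              = inner (v t' - u t') (e n) - inner (v 0 - u 0) (e n)"
          by (simp add: inner_diff_left)
        ultimately show ?thesis by simp
      qed
      have wpos: "\<And>n. 0 \<le> lam n powr \<alpha>" "\<And>n. 0 \<le> lam n powr (-\<alpha>)" by auto
      have wHs: "summable (\<lambda>n. lam n powr \<alpha> * (inner (v s - u s) (e n))\<^sup>2)" if "s > 0" for s
        using summable_diff_sq(1)[of "\<lambda>n. lam n powr \<alpha>" "\<lambda>n. inner (v s) (e n)" "\<lambda>n. inner (u s) (e n)"]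
          vHs[OF that] uHs[OF that] by (simp add: Hs_def inner_diff_left)
      have fv: "summable (\<lambda>n. lam n powr (-\<alpha>) * (f (v s) n)\<^sup>2)" "summable (\<lambda>n. lam n powr (-\<alpha>) * (f (u s) n)\<^sup>2)"
        if "s > 0" for s
        using f_maps vHs[OF that] uHs[OF that] by (auto simp: Hneg_def)
      have \<phi>sum: "summable (\<lambda>n. lam n powr (-\<alpha>) * (f (v s) n - f (u s) n)\<^sup>2)" if "s > 0" for s
        by (rule summable_diff_sq(1)[OF fv[OF that]]) simp
      have fC: "(\<Sum>n. lam n powr (-\<alpha>) * (f x n)\<^sup>2) \<le> C\<^sup>2" if "x \<in> Hs lam e \<alpha>" for x
      proof (rule sqrt_le_sq)
        show "sqrt (\<Sum>n. lam n powr (-\<alpha>) * (f x n)\<^sup>2) \<le> C"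
          using f_bdd that by (simp add: Hneg_norm_def)
        show "0 \<le> (\<Sum>n. lam n powr (-\<alpha>) * (f x n)\<^sup>2)"
          by (rule suminf_nonneg) (use f_maps that in \<open>auto simp: Hneg_def\<close>)
      qed
      have bdd: "(\<Sum>n. lam n powr (-\<alpha>) * (f (v s) n - f (u s) n)\<^sup>2) \<le> 4 * C\<^sup>2" if "s > 0" for s
        using summable_diff_sq(2)[OF fv[OF that]] fC[OF vHs[OF that]] fC[OF uHs[OF that]] by simp
      have lip: "(\<Sum>n. lam n powr (-\<alpha>) * (f (v s) n - f (u s) n)\<^sup>2)
                  \<le> L'\<^sup>2 * (\<Sum>n. lam n powr \<alpha> * (inner (v s - u s) (e n))\<^sup>2)" if "s > 0" for s
      proof -
        define Y where "Y = (\<Sum>n. lam n powr (-\<alpha>) * (f (v s) n - f (u s) n)\<^sup>2)"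
        define W where "W = (\<Sum>n. lam n powr \<alpha> * (inner (v s - u s) (e n))\<^sup>2)"
        have Y0: "0 \<le> Y" unfolding Y_def by (rule suminf_nonneg[OF \<phi>sum[OF that]]) simp
        have W0: "0 \<le> W" unfolding W_def by (rule suminf_nonneg[OF wHs[OF that]]) simp
        have "sqrt Y \<le> L * sqrt W"
          using f_lip vHs[OF that] uHs[OF that] by (simp add: Y_def W_def Hneg_norm_def Hs_norm_def)
        also have "\<dots> \<le> L' * sqrt W" by (rule mult_right_mono[OF L'ge]) (simp add: W0)
        finally have "Y \<le> (L' * sqrt W)\<^sup>2" by (rule sqrt_le_sq[OF _ Y0])
        then show ?thesis using W0 by (simp add: Y_def W_def power_mult_distrib)
      qed
      have coef: "b \<le> \<mu> n - L' * lam n powr \<alpha>" for n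
      proof (cases "n < N")
        case True
        have "lam n \<le> lN" using lam_mono True by (simp add: lN_def monoD)
        then have "lam n powr \<alpha> \<le> lN powr \<alpha>" using alpha lampos[of n] by (intro powr_mono2) auto
        then have "L' * lam n powr \<alpha> \<le> K0" unfolding K0_def using L'pos by (intro mult_left_mono) auto
        then show ?thesis using True lampos[of n] unfolding b_def \<beta>_def \<mu>_def by auto
      next
        case False
        have ln: "lN \<le> lam n" using lam_mono False by (simp add: lN_def monoD)
        have split: "lam n = lam n powr \<alpha> * lam n powr (1 - \<alpha>)"
          using lampos[of n] by (simp add: powr_add[symmetric])
        have "c0 \<le> lam n powr \<alpha> * (lam n powr (1 - \<alpha>) - L')"
          unfolding c0_def
        proof (rule mult_mono)
          show "lN powr \<alpha> \<le> lam n powr \<alpha>" using ln alpha lNpos by (intro powr_mono2) auto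
          show "lN powr (1 - \<alpha>) - L' \<le> lam n powr (1 - \<alpha>) - L'" using ln alpha lNpos by (simp add: powr_mono2)
          show "0 \<le> lam n powr \<alpha>" by simp
          show "0 \<le> lN powr (1 - \<alpha>) - L'" using L'lt by simp
        qed
        also have "\<dots> = lam n - L' * lam n powr \<alpha>" by (subst (2) split) (simp add: algebra_simps)
        finally show ?thesis using False unfolding b_def \<beta>_def \<mu>_def by auto
      qed
      have \<mu>ge: "lam n \<le> \<mu> n" for n using Kpos by (simp add: \<mu>_def)
      have wc: "continuous_on {0..} (\<lambda>s. v s - u s)" by (intro continuous_intros vc uc)
      have "norm (v t - u t) \<le> norm (v 0 - u 0) * exp (- b * t)"
        by (rule energy_core[where w="\<lambda>s. v s - u s" and \<phi>="\<lambda>s n. f (v s) n - f (u s) n"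
              and lam=lam and \<mu>=\<mu> and \<alpha>=\<alpha> and L'=L' and b=b and C\<phi>="4 * C\<^sup>2", OF basis lampos lam0 alpha(2) wc
              int wHs \<phi>sum lip bdd coef \<mu>ge L'pos bpos' t])
      then show "norm (v t - u t) \<le> norm (v 0 - u 0) * exp (- \<beta> K * t)" by (simp add: b_def)
    qed
  qed
qed


end
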